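(* Let $E,F$ be Banach lattices and let $S,T:E\to F$ be operators with $0\le S\le T$. If $T$ is limitedly L-weakly compact, then $S$ is limitedly L-weakly compact.
   Context: All vector spaces are real and operators are linear and bounded. $S\le T$ means $T-S$ is a positive operator. For a subset $A$ of a Banach lattice $F$, $\mathrm{sol}(A)=\bigcup_{a\in A}[-|a|,|a|]$. A subset $A\subseteq F$ is an Lwc-set if every disjoint sequence in $\mathrm{sol}(A)$ is norm-null. A bounded subset $A$ of a Banach space $X$ is limited if every weak$^\ast$-null sequence in $X'$ converges to $0$ uniformly on $A$. An operator $T:X\to F$ is limitedly L-weakly compact if $T$ maps every limited subset of $X$ onto an Lwc-subset of $F$. *)

theory Defs
  imports "HOL-Analysis.Analysis"
begin

definition lat_abs :: "'a::{lattice, uminus} \<Rightarrow> 'a" where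
  "lat_abs x = sup x (- x)"

class banach_lattice = banach + ordered_real_vector + lattice +
  assumes lattice_norm: "sup x (- x) \<le> sup y (- y) \<Longrightarrow> norm x \<le> norm y"

definition positive_op :: "('a::banach_lattice \<Rightarrow> 'b::banach_lattice) \<Rightarrow> bool" where
  "positive_op T \<longleftrightarrow> (\<forall>x. 0 \<le> x \<longrightarrow> 0 \<le> T x)"

definition sol :: "'a::banach_lattice set \<Rightarrow> 'a set" where
  "sol A = (\<Union>a\<in>A. {y. - lat_abs a \<le> y \<and> y \<le> lat_abs a})"

definition disjoint_seq :: "(nat \<Rightarrow> 'a::banach_lattice) \<Rightarrow> bool" where
  "disjoint_seq x \<longleftrightarrow> (\<forall>n m. n \<noteq> m \<longrightarrow> inf (lat_abs (x n)) (lat_abs (x m)) = 0)"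

definition lwc_set :: "'a::banach_lattice set \<Rightarrow> bool" where
  "lwc_set A \<longleftrightarrow> (\<forall>x. (\<forall>n. x n \<in> sol A) \<and> disjoint_seq x \<longrightarrow> (\<lambda>n. norm (x n)) \<longlonglongrightarrow> 0)"

definition weak_star_null :: "(nat \<Rightarrow> 'a::real_normed_vector \<Rightarrow> real) \<Rightarrow> bool" where
  "weak_star_null f \<longleftrightarrow> (\<forall>n. bounded_linear (f n)) \<and> (\<forall>x. (\<lambda>n. f n x) \<longlonglongrightarrow> 0)"

definition limited_set :: "'a::real_normed_vector set \<Rightarrow> bool" where
  "limited_set A \<longleftrightarrow> bounded A \<and>
     (\<forall>f. weak_star_null f \<longrightarrow>
        (\<forall>e>0. \<exists>N. \<forall>n\<ge>N. \<forall>a\<in>A. \<bar>f n a\<bar> < e))"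

definition limitedly_L_weakly_compact :: "('a::banach_lattice \<Rightarrow> 'b::banach_lattice) \<Rightarrow> bool" where
  "limitedly_L_weakly_compact T \<longleftrightarrow> (\<forall>A. limited_set A \<longrightarrow> lwc_set (T ` A))"

end

theory Submission
  imports Defs "HOL-Library.Lattice_Algebras"
begin


definition sublin :: "('a::real_vector \<Rightarrow> real) \<Rightarrow> bool" where
  "sublin p \<longleftrightarrow> (\<forall>x y. p (x + y) \<le> p x + p y) \<and> (\<forall>c x. c > 0 \<longrightarrow> p (c *\<^sub>R x) = c * p x)"

lemma sublin_0: assumes "sublin p" shows "p 0 = 0"
proof -
  have "\<forall>c>0. \<forall>x. p (c *\<^sub>R x) = c * p x" using assms unfolding sublin_def by auto
  from this[rule_format, of 2 0] show ?thesis by simp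
qed

lemma sublin_add: "sublin p \<Longrightarrow> p (x + y) \<le> p x + p y" unfolding sublin_def by auto
lemma sublin_pos: "sublin p \<Longrightarrow> c > 0 \<Longrightarrow> p (c *\<^sub>R x) = c * p x" unfolding sublin_def by auto

definition goodG :: "('a::real_vector \<Rightarrow> real) \<Rightarrow> ('a \<times> real) set \<Rightarrow> bool" where
  "goodG p G \<longleftrightarrow> (0,0) \<in> G \<and> (\<forall>x a y b. (x,a)\<in>G \<longrightarrow> (y,b)\<in>G \<longrightarrow> (x+y,a+b)\<in>G)
    \<and> (\<forall>x a c. (x,a)\<in>G \<longrightarrow> (c *\<^sub>R x, c*a) \<in> G)
    \<and> (\<forall>x a b. (x,a)\<in>G \<longrightarrow> (x,b)\<in>G \<longrightarrow> a = b)
    \<and> (\<forall>x a. (x,a)\<in>G \<longrightarrow> a \<le> p x)"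

lemma goodG_ext:
  assumes sp: "sublin p" and g: "goodG p G" and x1: "x1 \<notin> fst ` G"
  shows "\<exists>G'. goodG p G' \<and> G \<subseteq> G' \<and> G' \<noteq> G"
proof -
  have add: "\<And>x a y b. (x,a)\<in>G \<Longrightarrow> (y,b)\<in>G \<Longrightarrow> (x+y,a+b)\<in>G"
    and scl: "\<And>x a c. (x,a)\<in>G \<Longrightarrow> (c *\<^sub>R x, c*a) \<in> G"
    and fn: "\<And>x a b. (x,a)\<in>G \<Longrightarrow> (x,b)\<in>G \<Longrightarrow> a = b"
    and dom: "\<And>x a. (x,a)\<in>G \<Longrightarrow> a \<le> p x"
    and z: "(0,0) \<in> G" using g unfolding goodG_def by blast+
  define L where "L = {b - p (y - x1) | y b. (y,b) \<in> G}"
  have lu: "b - p (y - x1) \<le> p (x + x1) - a" if "(x,a)\<in>G" "(y,b)\<in>G" for x a y b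
  proof -
    have "a + b \<le> p (x + y)" using dom[OF add[OF that]] .
    also have "x + y = (x + x1) + (y - x1)" by simp
    also have "p \<dots> \<le> p (x + x1) + p (y - x1)" by (rule sublin_add[OF sp])
    finally show ?thesis by simp
  qed
  define c where "c = Sup L"
  have Lne: "L \<noteq> {}" using z unfolding L_def by blast
  have Lbdd: "bdd_above L" unfolding L_def bdd_above_def using lu z by blast
  have cL: "b - p (y - x1) \<le> c" if "(y,b)\<in>G" for y b
    unfolding c_def by (rule cSup_upper[OF _ Lbdd]) (use that L_def in blast)
  have cU: "c \<le> p (x + x1) - a" if "(x,a)\<in>G" for x a
    unfolding c_def by (rule cSup_least[OF Lne]) (use that lu L_def in blast)
  define G' where "G' = {(x + t *\<^sub>R x1, a + t*c) | x a t. (x,a) \<in> G}"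
  have "goodG p G'"
    unfolding goodG_def
  proof (intro conjI allI impI)
    show "(0,0) \<in> G'" unfolding G'_def using z by force
  next
    fix x a y b assume "(x,a) \<in> G'" "(y,b) \<in> G'"
    then obtain x' a' t y' b' s where "(x',a')\<in>G" "(y',b')\<in>G" "x = x' + t *\<^sub>R x1" "a = a' + t*c"
       "y = y' + s *\<^sub>R x1" "b = b' + s*c" unfolding G'_def by blast
    then show "(x+y, a+b) \<in> G'" unfolding G'_def
      by (intro CollectI exI[of _ "x'+y'"] exI[of _ "a'+b'"] exI[of _ "t+s"])
         (auto simp: add algebra_simps)
  next
    fix x a r assume "(x,a) \<in> G'"
    then obtain x' a' t where "(x',a')\<in>G" "x = x' + t *\<^sub>R x1" "a = a' + t*c"
      unfolding G'_def by blast
    then have e: "(r *\<^sub>R x, r*a) = (r *\<^sub>R x' + (r*t) *\<^sub>R x1, r*a' + (r*t)*c)"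
      by (simp add: algebra_simps)
    have "(r *\<^sub>R x', r*a') \<in> G" using scl \<open>(x',a')\<in>G\<close> by blast
    then show "(r *\<^sub>R x, r*a) \<in> G'" unfolding G'_def e by blast
  next
    fix x a b assume "(x,a) \<in> G'" "(x,b) \<in> G'"
    then obtain x' a' t y' b' s where h: "(x',a')\<in>G" "(y',b')\<in>G" "x = x' + t *\<^sub>R x1" "a = a' + t*c"
       "x = y' + s *\<^sub>R x1" "b = b' + s*c" unfolding G'_def by blast
    have ts: "t = s"
    proof (rule ccontr)
      assume "t \<noteq> s"
      have "(y' - x', b' - a') \<in> G" using add[OF h(2) scl[OF h(1), of "-1"]] by simp
      from scl[OF this, of "1/(t-s)"]
      have "((1/(t-s)) *\<^sub>R (y' - x'), (1/(t-s))*(b' - a')) \<in> G" .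
      moreover have "y' - x' = (t - s) *\<^sub>R x1" using h(3,5) by (simp add: algebra_simps)
      ultimately have "(x1, (1/(t-s))*(b' - a')) \<in> G" using \<open>t \<noteq> s\<close> by simp
      then show False using x1 by force
    qed
    then have "x' = y'" using h by simp
    then show "a = b" using h ts fn by auto
  next
    fix x a assume "(x,a) \<in> G'"
    then obtain x' a' t where h: "(x',a')\<in>G" "x = x' + t *\<^sub>R x1" "a = a' + t*c"
      unfolding G'_def by blast
    consider "t > 0" | "t = 0" | "t < 0" by linarith
    then show "a \<le> p x"
    proof cases
      case 1
      have "c \<le> p ((1/t) *\<^sub>R x' + x1) - (1/t)*a'" using cU[OF scl[OF h(1), of "1/t"]] .
      then have "t * c \<le> t * (p ((1/t) *\<^sub>R x' + x1) - (1/t)*a')" using 1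
        by (intro mult_left_mono) auto
      also have "\<dots> = t * p ((1/t) *\<^sub>R x' + x1) - a'" using 1 by (simp add: right_diff_distrib)
      also have "t * p ((1/t) *\<^sub>R x' + x1) = p (t *\<^sub>R ((1/t) *\<^sub>R x' + x1))"
        using sublin_pos[OF sp 1] by simp
      also have "t *\<^sub>R ((1/t) *\<^sub>R x' + x1) = x" using 1 h by (simp add: algebra_simps)
      finally show ?thesis using h by simp
    next
      case 2 then show ?thesis using h dom by simp
    next
      case 3
      define s where "s = -t"
      have s: "s > 0" using 3 s_def by simp
      have "(1/s)*a' - p ((1/s) *\<^sub>R x' - x1) \<le> c" using cL[OF scl[OF h(1), of "1/s"]] .
      then have "s * ((1/s)*a' - p ((1/s) *\<^sub>R x' - x1)) \<le> s * c" using s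
        by (intro mult_left_mono) auto
      then have "a' - s * p ((1/s) *\<^sub>R x' - x1) \<le> s * c" using s by (simp add: right_diff_distrib)
      also have "s * p ((1/s) *\<^sub>R x' - x1) = p (s *\<^sub>R ((1/s) *\<^sub>R x' - x1))"
        using sublin_pos[OF sp s] by simp
      also have "s *\<^sub>R ((1/s) *\<^sub>R x' - x1) = x" using s h s_def by (simp add: algebra_simps)
      finally show ?thesis using h s_def by simp
    qed
  qed
  moreover have "G \<subseteq> G'" unfolding G'_def by force
  moreover have "(x1, c) \<in> G'" unfolding G'_def using z by force
  then have "G' \<noteq> G" using x1 by force
  ultimately show ?thesis by blast
qed


lemma goodG_D:
  assumes "goodG p G"
  shows "(0,0) \<in> G" "\<And>x a y b. (x,a)\<in>G \<Longrightarrow> (y,b)\<in>G \<Longrightarrow> (x+y,a+b)\<in>G"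
    "\<And>x a c. (x,a)\<in>G \<Longrightarrow> (c *\<^sub>R x, c*a) \<in> G"
    "\<And>x a b. (x,a)\<in>G \<Longrightarrow> (x,b)\<in>G \<Longrightarrow> a = b"
    "\<And>x a. (x,a)\<in>G \<Longrightarrow> a \<le> p x"
  using assms unfolding goodG_def by blast+

theorem hahn_banach_sublin:
  fixes p :: "'a::real_vector \<Rightarrow> real"
  assumes sp: "sublin p"
  shows "\<exists>f. linear f \<and> (\<forall>x. f x \<le> p x) \<and> f z0 = p z0"
proof -
  define G0 where "G0 = {(t *\<^sub>R z0, t * p z0) | t. True}"
  have p0: "p 0 = 0" using sublin_0[OF sp] .
  have g0: "goodG p G0" unfolding goodG_def
  proof (intro conjI allI impI)
    show "(0,0) \<in> G0" unfolding G0_def by (intro CollectI exI[of _ 0]) simp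
  next
    fix x a y b assume "(x,a) \<in> G0" "(y,b) \<in> G0"
    then obtain t s where "x = t *\<^sub>R z0" "a = t * p z0" "y = s *\<^sub>R z0" "b = s * p z0"
      unfolding G0_def by blast
    then show "(x+y,a+b) \<in> G0" unfolding G0_def
      by (intro CollectI exI[of _ "t+s"]) (simp add: algebra_simps)
  next
    fix x a r assume "(x,a) \<in> G0"
    then obtain t where "x = t *\<^sub>R z0" "a = t * p z0" unfolding G0_def by blast
    then show "(r *\<^sub>R x, r*a) \<in> G0" unfolding G0_def
      by (intro CollectI exI[of _ "r*t"]) (simp add: algebra_simps)
  next
    fix x a b assume "(x,a) \<in> G0" "(x,b) \<in> G0"
    then obtain t s where h: "x = t *\<^sub>R z0" "a = t * p z0" "x = s *\<^sub>R z0" "b = s * p z0"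
      unfolding G0_def by blast
    show "a = b"
    proof (cases "t = s")
      case True then show ?thesis using h by simp
    next
      case False
      have "(t - s) *\<^sub>R z0 = 0" using h by (metis eq_iff_diff_eq_0 scaleR_left_diff_distrib)
      then have "z0 = 0" using False by simp
      then show ?thesis using h p0 by simp
    qed
  next
    fix x a assume "(x,a) \<in> G0"
    then obtain t where h: "x = t *\<^sub>R z0" "a = t * p z0" unfolding G0_def by blast
    consider "t > 0" | "t = 0" | "t < 0" by linarith
    then show "a \<le> p x"
    proof cases
      case 1 then show ?thesis using h sublin_pos[OF sp 1] by simp
    next
      case 2 then show ?thesis using h p0 by simp
    next
      case 3
      have "p 0 \<le> p z0 + p (- z0)" using sublin_add[OF sp, of z0 "-z0"] by simp
      then have "0 \<le> p z0 + p (-z0)" using p0 by simp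
      moreover have "p x = (-t) * p (-z0)" using h sublin_pos[OF sp, of "-t" "-z0"] 3 by simp
      ultimately show ?thesis
      proof -
        have "t * (p z0 + p (-z0)) \<le> 0" using 3 \<open>0 \<le> p z0 + p (-z0)\<close>
          by (intro mult_nonpos_nonneg) auto
        then show ?thesis using h \<open>p x = (-t) * p (-z0)\<close> by (simp add: distrib_left)
      qed
    qed
  qed
  define A where "A = {G. goodG p G \<and> G0 \<subseteq> G}"
  have "\<exists>U\<in>A. \<forall>X\<in>C. X \<subseteq> U" if C: "C \<in> chains A" for C
  proof (cases "C = {}")
    case True then show ?thesis using g0 unfolding A_def by blast
  next
    case False
    then obtain G1 where G1: "G1 \<in> C" by blast
    have CA: "C \<subseteq> A" and ch: "\<And>X Y. X \<in> C \<Longrightarrow> Y \<in> C \<Longrightarrow> X \<subseteq> Y \<or> Y \<subseteq> X"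
      using chainsD2[OF C] chainsD[OF C] by blast+
    have gd: "\<And>X. X \<in> C \<Longrightarrow> goodG p X" and sub: "\<And>X. X \<in> C \<Longrightarrow> G0 \<subseteq> X"
      using CA unfolding A_def by blast+
    have two: "\<exists>X\<in>C. u \<in> X \<and> v \<in> X" if uv: "u \<in> \<Union>C" "v \<in> \<Union>C" for u v
    proof -
      obtain X Y where "X \<in> C" "Y \<in> C" "u \<in> X" "v \<in> Y" using uv by blast
      then show ?thesis using ch[of X Y] by blast
    qed
    have "goodG p (\<Union>C)" unfolding goodG_def
    proof (intro conjI allI impI)
      show "(0,0) \<in> \<Union>C" using G1 goodG_D(1)[OF gd[OF G1]] by blast
    next
      fix x a y b assume "(x,a) \<in> \<Union>C" "(y,b) \<in> \<Union>C"
      then obtain X where "X \<in> C" "(x,a) \<in> X" "(y,b) \<in> X" using two by blast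
      then show "(x+y,a+b) \<in> \<Union>C" using goodG_D(2)[OF gd[of X]] by blast
    next
      fix x a r assume "(x,a) \<in> \<Union>C"
      then obtain X where "X \<in> C" "(x,a) \<in> X" by blast
      then show "(r *\<^sub>R x, r*a) \<in> \<Union>C" using goodG_D(3)[OF gd[of X]] by blast
    next
      fix x a b assume "(x,a) \<in> \<Union>C" "(x,b) \<in> \<Union>C"
      then obtain X where "X \<in> C" "(x,a) \<in> X" "(x,b) \<in> X" using two by blast
      then show "a = b" using goodG_D(4)[OF gd[of X]] by blast
    next
      fix x a assume "(x,a) \<in> \<Union>C"
      then obtain X where "X \<in> C" "(x,a) \<in> X" by blast
      then show "a \<le> p x" using goodG_D(5)[OF gd[of X]] by blast
    qed
    moreover have "G0 \<subseteq> \<Union>C" using G1 sub by blast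
    ultimately show ?thesis unfolding A_def by blast
  qed
  then have "\<forall>C\<in>chains A. \<exists>U\<in>A. \<forall>X\<in>C. X \<subseteq> U" by (rule ballI)
  then have "\<exists>M\<in>A. \<forall>X\<in>A. M \<subseteq> X \<longrightarrow> X = M" by (rule Zorn_Lemma2)
  then obtain M where MA: "M \<in> A" and mx0: "\<forall>X\<in>A. M \<subseteq> X \<longrightarrow> X = M" by (rule bexE)
  have mx: "\<And>X. X \<in> A \<Longrightarrow> M \<subseteq> X \<Longrightarrow> X = M" using mx0 by blast
  have gM: "goodG p M" and G0M: "G0 \<subseteq> M" using MA unfolding A_def by blast+
  have full: "x \<in> fst ` M" for x
  proof (rule ccontr)
    assume "x \<notin> fst ` M"
    from goodG_ext[OF sp gM this] obtain G' where "goodG p G'" "M \<subseteq> G'" "G' \<noteq> M" by blast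
    moreover have "G' \<in> A" using \<open>goodG p G'\<close> \<open>M \<subseteq> G'\<close> G0M unfolding A_def by blast
    ultimately show False using mx by blast
  qed
  note fnM = goodG_D(4)[OF gM]
  define f where "f x = (THE a. (x,a) \<in> M)" for x
  have fM: "(x, f x) \<in> M" for x
  proof -
    obtain a where "(x,a) \<in> M" using full[of x] by force
    then have "f x = a" unfolding f_def
      by (rule the_equality) (rule fnM[OF _ \<open>(x,a) \<in> M\<close>])
    then show ?thesis using \<open>(x,a) \<in> M\<close> by simp
  qed
  have fval: "(x,a) \<in> M \<Longrightarrow> f x = a" for x a using fM[of x] fnM by metis
  have addM: "\<And>x a y b. (x,a)\<in>M \<Longrightarrow> (y,b)\<in>M \<Longrightarrow> (x+y,a+b)\<in>M"
    and sclM: "\<And>x a c. (x,a)\<in>M \<Longrightarrow> (c *\<^sub>R x, c*a) \<in> M"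
    and domM: "\<And>x a. (x,a)\<in>M \<Longrightarrow> a \<le> p x"
    using goodG_D[OF gM] by blast+
  have "linear f"
  proof (rule linearI)
    fix x y show "f (x + y) = f x + f y"
      using addM[OF fM[of x] fM[of y]] by (rule fval)
  next
    fix c x have "f (c *\<^sub>R x) = c * f x"
      using sclM[OF fM[of x]] by (rule fval)
    then show "f (c *\<^sub>R x) = c *\<^sub>R f x" by simp
  qed
  moreover have "\<forall>x. f x \<le> p x" using domM fM by blast
  moreover have "(z0, p z0) \<in> G0" unfolding G0_def by (intro CollectI exI[of _ 1]) simp
  then have "f z0 = p z0" using G0M fval by blast
  ultimately show ?thesis by blast
qed



context banach_lattice begin
subclass lattice_ab_group_add ..
end

lemma scale_sup:
  fixes a b :: "'a::banach_lattice"
  assumes "c > 0" shows "c *\<^sub>R sup a b = sup (c *\<^sub>R a) (c *\<^sub>R b)"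
proof (rule antisym)
  have "a \<le> (1/c) *\<^sub>R sup (c *\<^sub>R a) (c *\<^sub>R b)"
  proof -
    have "(1/c) *\<^sub>R (c *\<^sub>R a) \<le> (1/c) *\<^sub>R sup (c *\<^sub>R a) (c *\<^sub>R b)"
      by (rule scaleR_left_mono) (use assms in auto)
    then show ?thesis using assms by simp
  qed
  moreover have "b \<le> (1/c) *\<^sub>R sup (c *\<^sub>R a) (c *\<^sub>R b)"
  proof -
    have "(1/c) *\<^sub>R (c *\<^sub>R b) \<le> (1/c) *\<^sub>R sup (c *\<^sub>R a) (c *\<^sub>R b)"
      by (rule scaleR_left_mono) (use assms in auto)
    then show ?thesis using assms by simp
  qed
  ultimately have "sup a b \<le> (1/c) *\<^sub>R sup (c *\<^sub>R a) (c *\<^sub>R b)" by (rule sup_least)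
  then have "c *\<^sub>R sup a b \<le> c *\<^sub>R ((1/c) *\<^sub>R sup (c *\<^sub>R a) (c *\<^sub>R b))"
    by (rule scaleR_left_mono) (use assms in auto)
  then show "c *\<^sub>R sup a b \<le> sup (c *\<^sub>R a) (c *\<^sub>R b)" using assms by simp
next
  show "sup (c *\<^sub>R a) (c *\<^sub>R b) \<le> c *\<^sub>R sup a b"
    using assms by (intro sup_least scaleR_left_mono) auto
qed

lemma scale_inf:
  fixes a b :: "'a::banach_lattice"
  assumes c: "c > 0" shows "c *\<^sub>R inf a b = inf (c *\<^sub>R a) (c *\<^sub>R b)"
proof (rule antisym)
  define m where "m = inf (c *\<^sub>R a) (c *\<^sub>R b)"
  have ia: "(1/c) *\<^sub>R (c *\<^sub>R a) = a" and ib: "(1/c) *\<^sub>R (c *\<^sub>R b) = b"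
    and im: "c *\<^sub>R ((1/c) *\<^sub>R m) = m" using c by auto
  have "(1/c) *\<^sub>R m \<le> (1/c) *\<^sub>R (c *\<^sub>R a)"
    by (rule scaleR_left_mono) (use c in \<open>auto simp: m_def\<close>)
  then have 1: "(1/c) *\<^sub>R m \<le> a" unfolding ia .
  have "(1/c) *\<^sub>R m \<le> (1/c) *\<^sub>R (c *\<^sub>R b)"
    by (rule scaleR_left_mono) (use c in \<open>auto simp: m_def\<close>)
  then have 2: "(1/c) *\<^sub>R m \<le> b" unfolding ib .
  from 1 2 have "(1/c) *\<^sub>R m \<le> inf a b" by (rule le_infI)
  then have "c *\<^sub>R ((1/c) *\<^sub>R m) \<le> c *\<^sub>R inf a b"
    by (rule scaleR_left_mono) (use c in auto)
  then show "m \<le> c *\<^sub>R inf a b" unfolding im .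
next
  show "c *\<^sub>R inf a b \<le> inf (c *\<^sub>R a) (c *\<^sub>R b)"
    using c by (intro le_infI scaleR_left_mono) auto
qed

lemma lat_abs_nonneg: "0 \<le> lat_abs (x::'a::banach_lattice)"
proof -
  have "x + (-x) \<le> lat_abs x + lat_abs x" unfolding lat_abs_def
    by (intro add_mono sup.cobounded1 sup.cobounded2)
  then have "0 \<le> lat_abs x + lat_abs x" by (simp only: add.right_inverse)
  then show ?thesis by (simp only: zero_le_double_add_iff_zero_le_single_add)
qed

lemma lat_abs_pos: "0 \<le> (y::'a::banach_lattice) \<Longrightarrow> lat_abs y = y"
  unfolding lat_abs_def by (rule sup_absorb1) (meson neg_le_0_iff_le order_trans)

lemma lat_abs_minus: "lat_abs (- (x::'a::banach_lattice)) = lat_abs x"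
  unfolding lat_abs_def minus_minus by (rule sup_commute)

lemma lat_abs_idem: "sup (lat_abs x) (- lat_abs x) = lat_abs (x::'a::banach_lattice)"
  using lat_abs_pos[OF lat_abs_nonneg[of x]] unfolding lat_abs_def[of "lat_abs x"] .

lemma norm_lat_abs: "norm (lat_abs (x::'a::banach_lattice)) = norm x"
proof (rule antisym)
  show "norm x \<le> norm (lat_abs x)"
    by (rule lattice_norm) (unfold lat_abs_idem, unfold lat_abs_def, rule order_refl)
  show "norm (lat_abs x) \<le> norm x"
    by (rule lattice_norm) (unfold lat_abs_idem, unfold lat_abs_def, rule order_refl)
qed

lemma norm_mono_pos:
  fixes w v :: "'a::banach_lattice"
  assumes "0 \<le> w" "w \<le> v" shows "norm w \<le> norm v"
proof (rule lattice_norm)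
  have "0 \<le> v" using assms by (rule order_trans)
  have "sup w (-w) = w" using lat_abs_pos[OF assms(1)] unfolding lat_abs_def .
  moreover have "sup v (-v) = v" using lat_abs_pos[OF \<open>0 \<le> v\<close>] unfolding lat_abs_def .
  ultimately show "sup w (-w) \<le> sup v (-v)" using assms(2) by (simp only:)
qed

lemma lat_abs_triangle: "lat_abs ((a::'a::banach_lattice) + b) \<le> lat_abs a + lat_abs b"
  unfolding lat_abs_def
proof (rule sup_least)
  show "a + b \<le> sup a (- a) + sup b (- b)" by (intro add_mono sup.cobounded1)
  have "- (a + b) = (-a) + (-b)" by (rule minus_add_distrib)
  also have "\<dots> \<le> sup a (- a) + sup b (- b)" by (intro add_mono sup.cobounded2)
  finally show "- (a + b) \<le> sup a (- a) + sup b (- b)" .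
qed

lemma lat_abs_scale: "c > 0 \<Longrightarrow> lat_abs (c *\<^sub>R (x::'a::banach_lattice)) = c *\<^sub>R lat_abs x"
  unfolding lat_abs_def scale_sup[of c x "-x"] scaleR_minus_right by (rule refl)

lemma inf_add_le:
  fixes u a b :: "'a::banach_lattice"
  assumes "0 \<le> u" "0 \<le> a" "0 \<le> b"
  shows "inf u (a + b) \<le> inf u a + inf u b"
proof -
  have e: "inf u a + inf u b = inf (inf (u + u) (a + u)) (inf (u + b) (a + b))"
    by (simp only: add_inf_distrib_left add_inf_distrib_right)
  have 1: "inf u (a + b) \<le> u + u"
    by (rule order_trans[OF inf.cobounded1 add_increasing2[OF assms(1) order_refl]])
  have 2: "inf u (a + b) \<le> a + u"
    by (rule order_trans[OF inf.cobounded1 add_increasing[OF assms(2) order_refl]])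
  have 3: "inf u (a + b) \<le> u + b"
    by (rule order_trans[OF inf.cobounded1 add_increasing2[OF assms(3) order_refl]])
  have 4: "inf u (a + b) \<le> a + b" by (rule inf.cobounded2)
  show ?thesis unfolding e by (intro le_infI 1 2 3 4)
qed



definition pf :: "'b::banach_lattice \<Rightarrow> 'b \<Rightarrow> real" where
  "pf y w = Sup ((\<lambda>k. norm (inf (lat_abs w) (k *\<^sub>R y))) ` {0<..})"

lemma inf_pos: "0 \<le> y \<Longrightarrow> 0 \<le> k \<Longrightarrow> 0 \<le> inf (lat_abs (w::'b::banach_lattice)) (k *\<^sub>R y)"
  by (intro le_infI lat_abs_nonneg scaleR_nonneg_nonneg)

lemma pf_vals_bdd:
  assumes "0 \<le> (y::'b::banach_lattice)"
  shows "bdd_above ((\<lambda>k. norm (inf (lat_abs w) (k *\<^sub>R y))) ` {0<..})"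
proof (rule bdd_aboveI2)
  fix k :: real assume "k \<in> {0<..}"
  then have "0 \<le> inf (lat_abs w) (k *\<^sub>R y)" using inf_pos[OF assms] by auto
  then have "norm (inf (lat_abs w) (k *\<^sub>R y)) \<le> norm (lat_abs w)"
    by (rule norm_mono_pos) (rule inf.cobounded1)
  then show "norm (inf (lat_abs w) (k *\<^sub>R y)) \<le> norm w" unfolding norm_lat_abs .
qed

lemma pf_ge:
  assumes "0 \<le> (y::'b::banach_lattice)" "k > 0"
  shows "norm (inf (lat_abs w) (k *\<^sub>R y)) \<le> pf y w"
  unfolding pf_def by (rule cSup_upper[OF _ pf_vals_bdd[OF assms(1)]]) (use assms in auto)

lemma pf_le:
  assumes "\<And>k. k > 0 \<Longrightarrow> norm (inf (lat_abs w) (k *\<^sub>R (y::'b::banach_lattice))) \<le> B"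
  shows "pf y w \<le> B"
  unfolding pf_def by (rule cSup_least) (use assms in auto)

lemma pf_minus: "pf y (- w) = pf y w"
  unfolding pf_def lat_abs_minus ..

lemma pf_scale_eq:
  fixes y w :: "'b::banach_lattice"
  assumes "c > 0"
  shows "norm (inf (lat_abs (c *\<^sub>R w)) (k *\<^sub>R y)) = c * norm (inf (lat_abs w) ((k/c) *\<^sub>R y))"
proof -
  have "k *\<^sub>R y = c *\<^sub>R ((k/c) *\<^sub>R y)" using assms by simp
  then have "inf (lat_abs (c *\<^sub>R w)) (k *\<^sub>R y) = c *\<^sub>R inf (lat_abs w) ((k/c) *\<^sub>R y)"
    unfolding lat_abs_scale[OF assms] scale_inf[OF assms] by (simp only:)
  then show ?thesis using assms by simp
qed

lemma pf_sublin:
  assumes y: "0 \<le> (y::'b::banach_lattice)"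
  shows "sublin (pf y)"
  unfolding sublin_def
proof (intro conjI allI impI)
  fix w1 w2 :: 'b
  show "pf y (w1 + w2) \<le> pf y w1 + pf y w2"
  proof (rule pf_le)
    fix k :: real assume k: "k > 0"
    have ky: "0 \<le> k *\<^sub>R y" using k y by (intro scaleR_nonneg_nonneg) auto
    have "inf (lat_abs (w1 + w2)) (k *\<^sub>R y) \<le> inf (lat_abs w1 + lat_abs w2) (k *\<^sub>R y)"
      by (rule inf_mono[OF lat_abs_triangle order_refl])
    also have "\<dots> = inf (k *\<^sub>R y) (lat_abs w1 + lat_abs w2)" by (rule inf_commute)
    also have "\<dots> \<le> inf (k *\<^sub>R y) (lat_abs w1) + inf (k *\<^sub>R y) (lat_abs w2)"
      by (rule inf_add_le[OF ky lat_abs_nonneg lat_abs_nonneg])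
    also have "\<dots> = inf (lat_abs w1) (k *\<^sub>R y) + inf (lat_abs w2) (k *\<^sub>R y)"
      by (simp only: inf_commute)
    finally have le: "inf (lat_abs (w1 + w2)) (k *\<^sub>R y) \<le> inf (lat_abs w1) (k *\<^sub>R y) + inf (lat_abs w2) (k *\<^sub>R y)" .
    have "norm (inf (lat_abs (w1 + w2)) (k *\<^sub>R y)) \<le> norm (inf (lat_abs w1) (k *\<^sub>R y) + inf (lat_abs w2) (k *\<^sub>R y))"
      by (rule norm_mono_pos[OF inf_pos[OF y] le]) (use k in auto)
    also have "\<dots> \<le> norm (inf (lat_abs w1) (k *\<^sub>R y)) + norm (inf (lat_abs w2) (k *\<^sub>R y))"
      by (rule norm_triangle_ineq)
    also have "\<dots> \<le> pf y w1 + pf y w2"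
      by (intro add_mono pf_ge[OF y k])
    finally show "norm (inf (lat_abs (w1 + w2)) (k *\<^sub>R y)) \<le> pf y w1 + pf y w2" .
  qed
next
  fix c :: real and w :: 'b assume c: "c > 0"
  show "pf y (c *\<^sub>R w) = c * pf y w"
  proof (rule antisym)
    show "pf y (c *\<^sub>R w) \<le> c * pf y w"
    proof (rule pf_le)
      fix k :: real assume k: "k > 0"
      have "norm (inf (lat_abs w) ((k/c) *\<^sub>R y)) \<le> pf y w" by (rule pf_ge[OF y]) (use k c in auto)
      then show "norm (inf (lat_abs (c *\<^sub>R w)) (k *\<^sub>R y)) \<le> c * pf y w"
        unfolding pf_scale_eq[OF c] using c by (simp add: mult_left_mono)
    qed
  next
    have "pf y w \<le> pf y (c *\<^sub>R w) / c"
    proof (rule pf_le)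
      fix k :: real assume k: "k > 0"
      have "norm (inf (lat_abs (c *\<^sub>R w)) ((c*k) *\<^sub>R y)) \<le> pf y (c *\<^sub>R w)"
        by (rule pf_ge[OF y]) (use k c in auto)
      then have "c * norm (inf (lat_abs w) (k *\<^sub>R y)) \<le> pf y (c *\<^sub>R w)"
        unfolding pf_scale_eq[OF c] using c by simp
      then show "norm (inf (lat_abs w) (k *\<^sub>R y)) \<le> pf y (c *\<^sub>R w) / c"
        using c by (simp add: field_simps)
    qed
    then show "c * pf y w \<le> pf y (c *\<^sub>R w)" using c by (simp add: field_simps)
  qed
qed

lemma pf_le_norm: "0 \<le> (y::'b::banach_lattice) \<Longrightarrow> pf y w \<le> norm w"
proof (rule pf_le)
  fix k :: real assume "0 \<le> y" "k > 0"
  then have "norm (inf (lat_abs w) (k *\<^sub>R y)) \<le> norm (lat_abs w)"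
    by (intro norm_mono_pos inf_pos inf.cobounded1) auto
  then show "norm (inf (lat_abs w) (k *\<^sub>R y)) \<le> norm w" unfolding norm_lat_abs .
qed

lemma abs_dominated:
  assumes "linear f" "\<And>w. f w \<le> pf y w"
  shows "\<bar>f w\<bar> \<le> pf y w"
proof -
  have "- f w = f (- w)" using linear_neg[OF assms(1)] by simp
  also have "\<dots> \<le> pf y w" using assms(2)[of "-w"] unfolding pf_minus .
  finally show ?thesis using assms(2)[of w] by linarith
qed



lemma abs_S_le:
  fixes S T :: "'a::banach_lattice \<Rightarrow> 'b::banach_lattice"
  assumes S: "bounded_linear S" and T: "bounded_linear T"
    and Sp: "positive_op S" and TSp: "positive_op (\<lambda>x. T x - S x)"
  shows "lat_abs (S e) \<le> T (lat_abs e)" and "0 \<le> T (lat_abs e)"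
proof -
  have lS: "linear S" using S bounded_linear.linear by blast
  have e1: "0 \<le> lat_abs e - e" unfolding lat_abs_def by (simp only: diff_ge_0_iff_ge sup.cobounded1)
  have e2: "0 \<le> lat_abs e - (- e)" unfolding lat_abs_def by (simp only: diff_ge_0_iff_ge sup.cobounded2)
  have "0 \<le> S (lat_abs e - e)" using Sp e1 unfolding positive_op_def by blast
  then have 1: "S e \<le> S (lat_abs e)" unfolding linear_diff[OF lS] by (simp only: diff_ge_0_iff_ge)
  have "0 \<le> S (lat_abs e - (- e))" using Sp e2 unfolding positive_op_def by blast
  then have 2: "- S e \<le> S (lat_abs e)" unfolding linear_diff[OF lS] linear_neg[OF lS] by (simp only: diff_ge_0_iff_ge)
  have "0 \<le> T (lat_abs e) - S (lat_abs e)" using TSp lat_abs_nonneg[of e] unfolding positive_op_def by blast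
  then have 3: "S (lat_abs e) \<le> T (lat_abs e)" by (simp only: diff_ge_0_iff_ge)
  show "lat_abs (S e) \<le> T (lat_abs e)" unfolding lat_abs_def[of "S e"]
    by (intro sup_least) (rule order_trans[OF 1 3], rule order_trans[OF 2 3])
  have "0 \<le> S (lat_abs e)" using Sp lat_abs_nonneg[of e] unfolding positive_op_def by blast
  then show "0 \<le> T (lat_abs e)" using 3 by (rule order_trans)
qed

lemma singleton_limited: "limited_set {v::'a::real_normed_vector}"
  unfolding limited_set_def
proof (intro conjI allI impI)
  show "bounded {v}" by simp
next
  fix f :: "nat \<Rightarrow> 'a \<Rightarrow> real" and e :: real assume "weak_star_null f" "e > 0"
  then have "(\<lambda>n. f n v) \<longlonglongrightarrow> 0" unfolding weak_star_null_def by blast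
  then obtain N where "\<forall>n\<ge>N. norm (f n v - 0) < e" using \<open>e > 0\<close> LIMSEQ_iff by metis
  then show "\<exists>N. \<forall>n\<ge>N. \<forall>a\<in>{v}. \<bar>f n a\<bar> < e" by auto
qed

lemma disj_scaled:
  fixes a b u v :: "'b::banach_lattice"
  assumes "inf a b = 0" "0 \<le> a" "0 \<le> b" "0 \<le> u" "0 \<le> v" "u \<le> s *\<^sub>R a" "v \<le> t *\<^sub>R b" "s > 0" "t > 0"
  shows "inf u v = 0"
proof (rule antisym)
  define K where "K = max s t"
  have K: "K > 0" using assms K_def by auto
  have "u \<le> K *\<^sub>R a" using assms(6) scaleR_right_mono[of s K a] assms(2) K_def by (meson max.cobounded1 order_trans)
  moreover have "v \<le> K *\<^sub>R b" using assms(7) scaleR_right_mono[of t K b] assms(3) K_def by (meson max.cobounded2 order_trans)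
  ultimately have "inf u v \<le> inf (K *\<^sub>R a) (K *\<^sub>R b)" by (rule inf_mono)
  also have "\<dots> = K *\<^sub>R inf a b" by (rule scale_inf[OF K, symmetric])
  also have "\<dots> = 0" unfolding assms(1) by (rule scaleR_zero_right)
  finally show "inf u v \<le> 0" .
  show "0 \<le> inf u v" using assms(4,5) by (rule le_infI)
qed

theorem proposition3p1:
  fixes S T :: "'a::banach_lattice \<Rightarrow> 'b::banach_lattice"
  assumes "bounded_linear S" and "bounded_linear T"
    and "positive_op S"
    and "positive_op (\<lambda>x. T x - S x)"
    and "limitedly_L_weakly_compact T"
  shows "limitedly_L_weakly_compact S"
  unfolding limitedly_L_weakly_compact_def
proof (intro allI impI)
  fix A :: "'a set" assume limA: "limited_set A"
  show "lwc_set (S ` A)" unfolding lwc_set_def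
  proof (intro allI impI)
    fix x :: "nat \<Rightarrow> 'b" assume "(\<forall>n. x n \<in> sol (S ` A)) \<and> disjoint_seq x"
    then have xs: "\<And>n. x n \<in> sol (S ` A)" and dj: "disjoint_seq x" by blast+
    define y where "y n = lat_abs (x n)" for n
    have y0: "0 \<le> y n" for n unfolding y_def by (rule lat_abs_nonneg)
    have ydj: "n \<noteq> m \<Longrightarrow> inf (y n) (y m) = 0" for n m using dj unfolding disjoint_seq_def y_def by blast
    have "\<exists>a. a \<in> A \<and> y n \<le> lat_abs (S a)" for n
    proof -
      obtain b where b: "b \<in> S ` A" "- lat_abs b \<le> x n" "x n \<le> lat_abs b"
        using xs[of n] unfolding sol_def by blast
      have "- x n \<le> lat_abs b" using b(2) by (simp only: minus_le_iff)
      then have "y n \<le> lat_abs b" unfolding y_def lat_abs_def[of "x n"] using b(3) by (rule sup_least[rotated])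
      then show ?thesis using b(1) by blast
    qed
    then obtain a where aA: "\<And>n. a n \<in> A" and ay: "\<And>n. y n \<le> lat_abs (S (a n))" by metis
    have "\<exists>f. linear f \<and> (\<forall>w. f w \<le> pf (y n) w) \<and> f (S (a n)) = pf (y n) (S (a n))" for n
      by (rule hahn_banach_sublin[OF pf_sublin[OF y0]])
    then obtain \<phi> where \<phi>lin: "\<And>n. linear (\<phi> n)" and \<phi>le: "\<And>n w. \<phi> n w \<le> pf (y n) w"
      and \<phi>eq: "\<And>n. \<phi> n (S (a n)) = pf (y n) (S (a n))" by metis
    have \<phi>abs: "\<bar>\<phi> n w\<bar> \<le> pf (y n) w" for n w by (rule abs_dominated[OF \<phi>lin \<phi>le])
    define g where "g n = (\<lambda>e. \<phi> n (S e))" for n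
    have bl\<phi>: "bounded_linear (\<phi> n)" for n
    proof (rule bounded_linear_intro[where K=1])
      fix u v show "\<phi> n (u + v) = \<phi> n u + \<phi> n v" by (rule linear_add[OF \<phi>lin])
    next
      fix r u show "\<phi> n (r *\<^sub>R u) = r *\<^sub>R \<phi> n u" by (rule linear_scale[OF \<phi>lin])
    next
      fix u show "norm (\<phi> n u) \<le> norm u * 1"
        using \<phi>abs[of n u] pf_le_norm[OF y0, of n u] by simp
    qed
    have wsn: "weak_star_null g" unfolding weak_star_null_def
    proof (intro conjI allI)
      fix n show "bounded_linear (g n)" unfolding g_def
        using bounded_linear_compose[OF bl\<phi> assms(1)] by (simp add: o_def)
    next
      fix e :: 'a
      have lwcT: "lwc_set (T ` {lat_abs e})"
        using assms(5) singleton_limited unfolding limitedly_L_weakly_compact_def by blast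
      note ST = abs_S_le[OF assms(1-4), of e]
      have "\<exists>k. k > 0 \<and> pf (y n) (S e) / 2 \<le> norm (inf (lat_abs (S e)) (k *\<^sub>R y n))" for n
      proof (cases "pf (y n) (S e) / 2 < pf (y n) (S e)")
        case True
        define V where "V = (\<lambda>k. norm (inf (lat_abs (S e)) (k *\<^sub>R y n))) ` {0<..}"
        have pfV: "pf (y n) (S e) = Sup V" unfolding V_def pf_def ..
        have ne: "V \<noteq> {}" unfolding V_def by auto
        have "pf (y n) (S e) / 2 < Sup V" using True pfV by linarith
        have bd: "bdd_above V" unfolding V_def by (rule pf_vals_bdd[OF y0])
        then have "\<exists>v\<in>V. pf (y n) (S e) / 2 < v"
          using less_cSup_iff[OF ne bd] \<open>pf (y n) (S e) / 2 < Sup V\<close> by blast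
        then obtain k where "k > 0" "pf (y n) (S e) / 2 < norm (inf (lat_abs (S e)) (k *\<^sub>R y n))"
          unfolding V_def by blast
        then show ?thesis by (intro exI[of _ k]) auto
      next
        case False
        have "0 \<le> norm (inf (lat_abs (S e)) ((1::real) *\<^sub>R y n))" by (rule norm_ge_zero)
        then have h: "pf (y n) (S e) / 2 \<le> norm (inf (lat_abs (S e)) ((1::real) *\<^sub>R y n))"
          using False by linarith
        show ?thesis by (rule exI[of _ 1], rule conjI[OF _ h]) simp
      qed
      then obtain k where k0: "\<And>n. k n > 0"
        and kle: "\<And>n. pf (y n) (S e) / 2 \<le> norm (inf (lat_abs (S e)) (k n *\<^sub>R y n))" by metis
      define w where "w n = inf (lat_abs (S e)) (k n *\<^sub>R y n)" for n
      have w0: "0 \<le> w n" for n unfolding w_def by (rule inf_pos[OF y0]) (use k0[of n] in auto)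
      have "w n \<in> sol (T ` {lat_abs e})" for n
      proof -
        have "w n \<le> T (lat_abs e)" unfolding w_def using ST(1) by (rule le_infI1)
        moreover have "- T (lat_abs e) \<le> w n" using ST(2) w0
          by (meson neg_le_0_iff_le order_trans)
        moreover have "lat_abs (T (lat_abs e)) = T (lat_abs e)" by (rule lat_abs_pos[OF ST(2)])
        ultimately show ?thesis unfolding sol_def by auto
      qed
      moreover have "disjoint_seq w" unfolding disjoint_seq_def
      proof (intro allI impI)
        fix n m :: nat assume "n \<noteq> m"
        have "inf (w n) (w m) = 0"
          by (rule disj_scaled[OF ydj[OF \<open>n \<noteq> m\<close>] y0 y0 w0 w0 _ _ k0[of n] k0[of m]])
             (simp_all only: w_def inf.cobounded2)
        then show "inf (lat_abs (w n)) (lat_abs (w m)) = 0"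
          unfolding lat_abs_pos[OF w0] .
      qed
      ultimately have wt: "(\<lambda>n. norm (w n)) \<longlonglongrightarrow> 0" using lwcT unfolding lwc_set_def by blast
      show "(\<lambda>n. g n e) \<longlonglongrightarrow> 0"
      proof (rule Lim_null_comparison)
        show "\<forall>\<^sub>F n in sequentially. norm (g n e) \<le> 2 * norm (w n)"
        proof (rule always_eventually, rule allI)
          fix n
          have "norm (g n e) \<le> pf (y n) (S e)" unfolding g_def using \<phi>abs[of n "S e"] by simp
          also have "\<dots> \<le> 2 * norm (w n)" using kle[of n] unfolding w_def by simp
          finally show "norm (g n e) \<le> 2 * norm (w n)" .
        qed
        show "(\<lambda>n. 2 * norm (w n)) \<longlonglongrightarrow> 0" using tendsto_mult_right_zero[OF wt, of 2] by simp
      qed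
    qed
    have unif: "\<forall>r>0. \<exists>N. \<forall>n\<ge>N. \<forall>b\<in>A. \<bar>g n b\<bar> < r"
      using limA wsn unfolding limited_set_def by blast
    show "(\<lambda>n. norm (x n)) \<longlonglongrightarrow> 0"
    proof (rule LIMSEQ_I)
      fix r :: real assume "r > 0"
      then obtain N where N: "\<And>n b. n \<ge> N \<Longrightarrow> b \<in> A \<Longrightarrow> \<bar>g n b\<bar> < r" using unif by blast
      show "\<exists>N. \<forall>n\<ge>N. norm (norm (x n) - 0) < r"
      proof (intro exI allI impI)
        fix n assume "n \<ge> N"
        have "inf (lat_abs (S (a n))) (1 *\<^sub>R y n) = y n"
          unfolding scaleR_one by (rule inf_absorb2[OF ay])
        then have "norm (y n) \<le> pf (y n) (S (a n))" using pf_ge[OF y0[of n], of 1 "S (a n)"] by simp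
        also have "\<dots> = g n (a n)" unfolding g_def by (rule \<phi>eq[symmetric])
        also have "\<dots> \<le> \<bar>g n (a n)\<bar>" by simp
        also have "\<dots> < r" by (rule N[OF \<open>n \<ge> N\<close> aA])
        finally show "norm (norm (x n) - 0) < r" unfolding y_def norm_lat_abs by simp
      qed
    qed
  qed
qed


end
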